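(* For every $n$-qubit raw quantum circuit $C$, $$\mathfrak G_n\circ[\![E(C)]\!]=[\![C]\!]\circ\mathfrak G_n .$$
   Context: Raw quantum circuits. These are terms generated from the following gates, with their numbers of wires: $H$ ($1$), $P(\varphi)$ ($1$, for each $\varphi\in\mathbb R$), $\mathrm{CNOT}$ ($2$), the scalar $s(\varphi)$ ($0$), the identity $\mathrm{id}$ ($1$), the swap $\mathrm{SW}$ ($2$) and the empty circuit ($0$). They are combined by $\circ$ (same number of wires) and $\otimes$ (stacking, the first factor on top). Their semantics $[\![C]\!]$ is a linear map on $\mathbb C^{\{0,1\}^n}$, with $[\![C_2\circ C_1]\!]=[\![C_2]\!][\![C_1]\!]$ and $[\![C_1\otimes C_2]\!]=[\![C_1]\!]\otimes[\![C_2]\!]$. On gates: - $H|x\rangle=\frac1{\sqrt2}(|0\rangle+(-1)^x|1\rangle)$; - $P(\varphi)|x\rangle=e^{ix\varphi}|x\rangle$; - $\mathrm{CNOT}|x,y\rangle=|x,x\oplus y\rangle$; - $\mathrm{SW}|x,y\rangle=|y,x\rangle$; - $s(\varphi)$ is multiplication by $e^{i\varphi}$; - $\mathrm{id}$ and the empty circuit are identities. Raw LOPP-circuits. These are terms generated from $\mathrm{ph}(\varphi)$ ($1$ mode), $\mathrm{bs}(\theta)$ ($2$ modes), $\mathrm{id}$ ($1$ mode), $\mathrm{sw}$ ($2$ modes) and the empty circuit, combined by $\circ$ and $\otimes$. Their semantics is a matrix on $\mathbb C^{m}$ ($m$ modes, basis $|0\rangle,\dots,|m-1\rangle$ from top to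 bottom), with $\otimes$ interpreted as direct sum and: - $[\![\mathrm{ph}(\varphi)]\!]=(e^{i\varphi})$; - $[\![\mathrm{bs}(\theta)]\!]=\begin{pmatrix}\cos\theta&i\sin\theta\\i\sin\theta&\cos\theta\end{pmatrix}$; - $[\![\mathrm{sw}]\!]=\begin{pmatrix}0&1\\1&0\end{pmatrix}$; - $[\![\mathrm{id}]\!]=(1)$. For a circuit $C$, $C^{\otimes 0}$ is empty and $C^{\otimes(m+1)}=C\otimes C^{\otimes m}$. Gray code. $G_0(0)=\epsilon$, and $G_n(k)=0G_{n-1}(k)$ if $k<2^{n-1}$, while $G_n(k)=1G_{n-1}(2^n-1-k)$ if $k\ge 2^{n-1}$. The map $\mathfrak G_n:\mathbb C^{2^n}\to\mathbb C^{\{0,1\}^n}$ is $|k\rangle\mapsto|G_n(k)\rangle$. Encoding. For each $k,n,\ell$, let $\sigma_{k,n,\ell}$ be a $2^{k+n+\ell}$-mode raw LOPP-circuit built only from $\mathrm{id}$ and $\mathrm{sw}$ such that $\mathfrak G\circ[\![\sigma_{k,n,\ell}]\!]\circ\mathfrak G^{-1}|x,y,z\rangle=|x,z,y\rangle$ for all $x\in\{0,1\}^k$, $y\in\{0,1\}^n$, $z\in\{0,1\}^\ell$ (here $\mathfrak G=\mathfrak G_{k+n+\ell}$). For an $n$-qubit raw circuit $C$, set $E(C)=E_{0,0}(C)$, where $E_{k,\ell}(C)$ is a $2^{k+n+\ell}$-mode circuit defined inductively by the following rules. - Compositions: - $E_{k,\ell}(C_1\otimes C_2)=E_{k+n_1,\ell}(C_2)\circ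 E_{k,\ell+n_2}(C_1)$, where $C_i$ has $n_i$ wires; - $E_{k,\ell}(C_2\circ C_1)=E_{k,\ell}(C_2)\circ E_{k,\ell}(C_1)$. - Structural gates and scalars: - $E_{k,\ell}(\mathrm{SW})=\sigma_{k,\ell,2}\circ\sigma_{k+\ell,1,1}\circ\sigma_{k,2,\ell}$; - $E_{k,\ell}(\text{empty})=\mathrm{id}^{\otimes2^{k+\ell}}$; - $E_{k,\ell}(\mathrm{id})=\mathrm{id}^{\otimes 2^{k+\ell+1}}$; - $E_{k,\ell}(s(\varphi))=\mathrm{ph}(\varphi)^{\otimes2^{k+\ell}}$. - When $k=\ell=0$: - $E_{0,0}(H)=(\mathrm{id}\otimes\mathrm{ph}(-\frac\pi2))\circ\mathrm{bs}(\frac\pi4)\circ(\mathrm{id}\otimes\mathrm{ph}(-\frac\pi2))$; - $E_{0,0}(P(\varphi))=\mathrm{id}\otimes\mathrm{ph}(\varphi)$; - $E_{0,0}(\mathrm{CNOT})=\mathrm{id}\otimes\mathrm{id}\otimes\mathrm{sw}$. - When $(k,\ell)\neq(0,0)$: - $E_{k,\ell}(H)=\sigma_{k,\ell,1}\circ B_H^{\otimes2^{k+\ell-1}}\circ\sigma_{k,1,\ell}$; - $E_{k,\ell}(P(\varphi))=\sigma_{k,\ell,1}\circ B_P^{\otimes 2^{k+\ell-1}}\circ\sigma_{k,1,\ell}$; - $E_{k,\ell}(\mathrm{CNOT})=\sigma_{k,\ell,2}\circ B_C^{\otimes 2^{k+\ell-1}}\circ\sigma_{k,2,\ell}$. Here: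 - $B_H=E_{0,0}(H)\otimes\big((\mathrm{ph}(-\frac\pi2)\otimes\mathrm{id})\circ\mathrm{bs}(\frac\pi4)\circ(\mathrm{ph}(-\frac\pi2)\otimes\mathrm{id})\big)$; - $B_P=\mathrm{id}\otimes\mathrm{ph}(\varphi)\otimes\mathrm{ph}(\varphi)\otimes\mathrm{id}$; - $B_C=\mathrm{id}\otimes\mathrm{id}\otimes\mathrm{sw}\otimes\mathrm{sw}\otimes\mathrm{id}\otimes\mathrm{id}$. *)

theory Defs
  imports Complex_Main
begin

datatype qc = QH | QP real | QCNOT | QScal real | QId | QSW | QEmpty
  | QComp qc qc   (* QComp C2 C1 = C2 \<circ> C1 *)
  | QTens qc qc   (* QTens C1 C2 = C1 \<otimes> C2, C1 on top *)

fun qwires :: "qc \<Rightarrow> nat" where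
  "qwires QH = 1" | "qwires (QP _) = 1" | "qwires QCNOT = 2" | "qwires (QScal _) = 0"
| "qwires QId = 1" | "qwires QSW = 2" | "qwires QEmpty = 0"
| "qwires (QComp C2 C1) = qwires C1"
| "qwires (QTens C1 C2) = qwires C1 + qwires C2"

fun qwf :: "qc \<Rightarrow> bool" where
  "qwf (QComp C2 C1) = (qwf C2 \<and> qwf C1 \<and> qwires C1 = qwires C2)"
| "qwf (QTens C1 C2) = (qwf C1 \<and> qwf C2)"
| "qwf _ = True"

definition bitstrings :: "nat \<Rightarrow> bool list set" where
  "bitstrings n = {x. length x = n}"

definition bitval :: "bool \<Rightarrow> real" where "bitval b = (if b then 1 else 0)"

text \<open>Semantics as matrix entries: qsem C y x = <y| [[C]] |x>, for bitstrings x, y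
  of length qwires C (bit False = 0, True = 1).\<close>
fun qsem :: "qc \<Rightarrow> bool list \<Rightarrow> bool list \<Rightarrow> complex" where
  "qsem QH y x = (if hd x \<and> hd y then -1 else 1) / complex_of_real (sqrt 2)"
| "qsem (QP \<phi>) y x = (if y = x then exp (\<i> * complex_of_real (bitval (hd x) * \<phi>)) else 0)"
| "qsem QCNOT y x = (if y = [x!0, x!0 \<noteq> x!1] then 1 else 0)"
| "qsem (QScal \<phi>) y x = exp (\<i> * complex_of_real \<phi>)"
| "qsem QId y x = (if y = x then 1 else 0)"
| "qsem QSW y x = (if y = [x!1, x!0] then 1 else 0)"
| "qsem QEmpty y x = 1"
| "qsem (QComp C2 C1) y x =
     (\<Sum>z\<in>bitstrings (qwires C1). qsem C2 y z * qsem C1 z x)"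
| "qsem (QTens C1 C2) y x =
     qsem C1 (take (qwires C1) y) (take (qwires C1) x) *
     qsem C2 (drop (qwires C1) y) (drop (qwires C1) x)"

datatype lc = Lph real | Lbs real | LId | LSw | LEmpty
  | LComp lc lc   (* LComp C2 C1 = C2 \<circ> C1 *)
  | LTens lc lc   (* LTens C1 C2 = C1 \<otimes> C2 (direct sum, C1 on top) *)

fun lmodes :: "lc \<Rightarrow> nat" where
  "lmodes (Lph _) = 1" | "lmodes (Lbs _) = 2" | "lmodes LId = 1" | "lmodes LSw = 2"
| "lmodes LEmpty = 0"
| "lmodes (LComp C2 C1) = lmodes C1"
| "lmodes (LTens C1 C2) = lmodes C1 + lmodes C2"

fun lwf :: "lc \<Rightarrow> bool" where
  "lwf (LComp C2 C1) = (lwf C2 \<and> lwf C1 \<and> lmodes C1 = lmodes C2)"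
| "lwf (LTens C1 C2) = (lwf C1 \<and> lwf C2)"
| "lwf _ = True"

fun only_id_sw :: "lc \<Rightarrow> bool" where
  "only_id_sw LId = True" | "only_id_sw LSw = True" | "only_id_sw LEmpty = True"
| "only_id_sw (LComp C2 C1) = (only_id_sw C2 \<and> only_id_sw C1)"
| "only_id_sw (LTens C1 C2) = (only_id_sw C1 \<and> only_id_sw C2)"
| "only_id_sw _ = False"

text \<open>Semantics as matrix entries: lsem C i j = <i| [[C]] |j>, for i, j < lmodes C.\<close>
fun lsem :: "lc \<Rightarrow> nat \<Rightarrow> nat \<Rightarrow> complex" where
  "lsem (Lph \<phi>) i j = (if i = 0 \<and> j = 0 then exp (\<i> * complex_of_real \<phi>) else 0)"
| "lsem (Lbs \<theta>) i j =
     (if i < 2 \<and> j < 2 then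
        (if i = j then complex_of_real (cos \<theta>) else \<i> * complex_of_real (sin \<theta>))
      else 0)"
| "lsem LId i j = (if i = 0 \<and> j = 0 then 1 else 0)"
| "lsem LSw i j = (if i < 2 \<and> j < 2 \<and> i \<noteq> j then 1 else 0)"
| "lsem LEmpty i j = 0"
| "lsem (LComp C2 C1) i j = (\<Sum>t<lmodes C1. lsem C2 i t * lsem C1 t j)"
| "lsem (LTens C1 C2) i j =
     (if i < lmodes C1 \<and> j < lmodes C1 then lsem C1 i j
      else if lmodes C1 \<le> i \<and> lmodes C1 \<le> j then lsem C2 (i - lmodes C1) (j - lmodes C1)
      else 0)"

fun lpow :: "lc \<Rightarrow> nat \<Rightarrow> lc" where
  "lpow C 0 = LEmpty"
| "lpow C (Suc m) = LTens C (lpow C m)"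

fun gray :: "nat \<Rightarrow> nat \<Rightarrow> bool list" where
  "gray 0 k = []"
| "gray (Suc n) k = (if k < 2 ^ n then False # gray n k
                     else True # gray n (2 ^ Suc n - 1 - k))"

text \<open>Matrix of \<G>_n : C^(2^n) \<rightarrow> C^({0,1}^n), |k> \<mapsto> |G_n(k)>, and of its inverse.\<close>
definition grayM :: "nat \<Rightarrow> bool list \<Rightarrow> nat \<Rightarrow> complex" where
  "grayM n y k = (if y = gray n k then 1 else 0)"

definition grayInvM :: "nat \<Rightarrow> nat \<Rightarrow> bool list \<Rightarrow> complex" where
  "grayInvM n k y = (if y = gray n k then 1 else 0)"

definition sigma_spec :: "(nat \<Rightarrow> nat \<Rightarrow> nat \<Rightarrow> lc) \<Rightarrow> bool" where
  "sigma_spec sig \<longleftrightarrow>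
    (\<forall>k n l. let N = k + n + l; s = sig k n l in
       only_id_sw s \<and> lwf s \<and> lmodes s = 2 ^ N \<and>
       (\<forall>x y z u. length x = k \<longrightarrow> length y = n \<longrightarrow> length z = l \<longrightarrow> length u = N \<longrightarrow>
          (\<Sum>i<2 ^ N. \<Sum>j<2 ^ N. grayM N u i * lsem s i j * grayInvM N j (x @ y @ z))
          = (if u = x @ z @ y then 1 else 0)))"

definition EH00 :: lc where
  "EH00 = LComp (LTens LId (Lph (-pi/2))) (LComp (Lbs (pi/4)) (LTens LId (Lph (-pi/2))))"

definition BH :: lc where
  "BH = LTens EH00
          (LComp (LTens (Lph (-pi/2)) LId) (LComp (Lbs (pi/4)) (LTens (Lph (-pi/2)) LId)))"

definition BP :: "real \<Rightarrow> lc" where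
  "BP \<phi> = LTens LId (LTens (Lph \<phi>) (LTens (Lph \<phi>) LId))"

definition BC :: lc where
  "BC = LTens LId (LTens LId (LTens LSw (LTens LSw (LTens LId LId))))"

fun enc :: "(nat \<Rightarrow> nat \<Rightarrow> nat \<Rightarrow> lc) \<Rightarrow> nat \<Rightarrow> nat \<Rightarrow> qc \<Rightarrow> lc" where
  "enc sig k l (QTens C1 C2) =
     LComp (enc sig (k + qwires C1) l C2) (enc sig k (l + qwires C2) C1)"
| "enc sig k l (QComp C2 C1) = LComp (enc sig k l C2) (enc sig k l C1)"
| "enc sig k l QSW = LComp (sig k l 2) (LComp (sig (k + l) 1 1) (sig k 2 l))"
| "enc sig k l QEmpty = lpow LId (2 ^ (k + l))"
| "enc sig k l QId = lpow LId (2 ^ (k + l + 1))"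
| "enc sig k l (QScal \<phi>) = lpow (Lph \<phi>) (2 ^ (k + l))"
| "enc sig k l QH =
     (if k = 0 \<and> l = 0 then EH00
      else LComp (sig k l 1) (LComp (lpow BH (2 ^ (k + l - 1))) (sig k 1 l)))"
| "enc sig k l (QP \<phi>) =
     (if k = 0 \<and> l = 0 then LTens LId (Lph \<phi>)
      else LComp (sig k l 1) (LComp (lpow (BP \<phi>) (2 ^ (k + l - 1))) (sig k 1 l)))"
| "enc sig k l QCNOT =
     (if k = 0 \<and> l = 0 then LTens LId (LTens LId LSw)
      else LComp (sig k l 2) (LComp (lpow BC (2 ^ (k + l - 1))) (sig k 2 l)))"

definition E :: "(nat \<Rightarrow> nat \<Rightarrow> nat \<Rightarrow> lc) \<Rightarrow> qc \<Rightarrow> lc" where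
  "E sig C = enc sig 0 0 C"

end

theory Submission
  imports Defs
begin


fun ginv :: "bool list \<Rightarrow> nat" where
  "ginv [] = 0"
| "ginv (b # w) = (if b then 2 ^ Suc (length w) - 1 - ginv w else ginv w)"

lemma ginv_lt: "ginv w < 2 ^ length w"
  by (induction w) auto

lemma length_gray: "length (gray N k) = N"
  by (induction N arbitrary: k) auto

lemma gray_ginv: "gray (length w) (ginv w) = w"
proof (induction w)
  case Nil thus ?case by simp
next
  case (Cons b w)
  have lt: "ginv w < 2 ^ length w" by (rule ginv_lt)
  show ?case
  proof (cases b)
    case True
    have "\<not> (2 ^ Suc (length w) - 1 - ginv w < 2 ^ length w)" using lt by simp
    moreover have "2 ^ Suc (length w) - 1 - (2 ^ Suc (length w) - 1 - ginv w) = ginv w"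
      using lt by simp
    ultimately show ?thesis using True Cons by simp
  next
    case False thus ?thesis using Cons lt by simp
  qed
qed

lemma ginv_gray: "k < 2 ^ N \<Longrightarrow> ginv (gray N k) = k"
proof (induction N arbitrary: k)
  case 0 thus ?case by simp
next
  case (Suc N)
  show ?case
  proof (cases "k < 2 ^ N")
    case True thus ?thesis using Suc by simp
  next
    case False
    have a: "2 ^ Suc N - 1 - k < 2 ^ N" using False Suc.prems by simp
    then have "ginv (gray N (2 ^ Suc N - 1 - k)) = 2 ^ Suc N - 1 - k" using Suc.IH by blast
    then show ?thesis using False Suc.prems by (simp add: length_gray)
  qed
qed

lemma ginv_inj: "length u = length v \<Longrightarrow> ginv u = ginv v \<Longrightarrow> u = v"
  by (metis gray_ginv)

lemma finite_bitstrings: "finite (bitstrings N)"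
proof -
  have "bitstrings N = {xs. set xs \<subseteq> (UNIV::bool set) \<and> length xs = N}"
    by (auto simp: bitstrings_def)
  thus ?thesis using finite_lists_length_eq[of "UNIV::bool set" N] by simp
qed

lemma gray_eq_iff: "length y = n \<Longrightarrow> j < 2 ^ n \<Longrightarrow> (y = gray n j) = (j = ginv y)"
  using ginv_gray gray_ginv by metis

lemma grayM_sum: "length y = n \<Longrightarrow> (\<Sum>j<2 ^ n. grayM n y j * X j) = X (ginv y)"
proof -
  assume l: "length y = n"
  have "(\<Sum>j<2 ^ n. grayM n y j * X j) = (\<Sum>j<2 ^ n. if j = ginv y then X j else 0)"
    by (rule sum.cong) (auto simp: grayM_def gray_eq_iff[OF l])
  also have "\<dots> = X (ginv y)" using ginv_lt[of y] l by (simp add: sum.delta)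
  finally show ?thesis .
qed

lemma grayInvM_sum: "length y = n \<Longrightarrow> (\<Sum>j<2 ^ n. X j * grayInvM n j y) = X (ginv y)"
proof -
  assume l: "length y = n"
  have "(\<Sum>j<2 ^ n. X j * grayInvM n j y) = (\<Sum>j<2 ^ n. if j = ginv y then X j else 0)"
    by (rule sum.cong) (auto simp: grayInvM_def gray_eq_iff[OF l])
  also have "\<dots> = X (ginv y)" using ginv_lt[of y] l by (simp add: sum.delta)
  finally show ?thesis .
qed

lemma ginv_image: "ginv ` bitstrings N = {..<2 ^ N}"
proof
  show "ginv ` bitstrings N \<subseteq> {..<2 ^ N}" using ginv_lt by (auto simp: bitstrings_def)
  show "{..<2 ^ N} \<subseteq> ginv ` bitstrings N"
  proof
    fix t assume "t \<in> {..<(2::nat) ^ N}"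
    then have "t = ginv (gray N t)" using ginv_gray by simp
    thus "t \<in> ginv ` bitstrings N" by (auto simp: bitstrings_def length_gray)
  qed
qed

lemma ginv_inj_on: "inj_on ginv (bitstrings N)"
  by (auto simp: inj_on_def bitstrings_def intro: ginv_inj)

lemma sum_reindex_gray: "(\<Sum>t<2 ^ N. f t) = (\<Sum>w\<in>bitstrings N. f (ginv w))"
  using sum.reindex[OF ginv_inj_on[of N], of f] ginv_image[of N] by simp

lemma lsem_comp_rep:
  "lmodes B = 2 ^ N \<Longrightarrow> lsem (LComp A B) i j = (\<Sum>w\<in>bitstrings N. lsem A i (ginv w) * lsem B (ginv w) j)"
  by (simp add: sum_reindex_gray)

definition perm :: "nat \<Rightarrow> nat \<Rightarrow> bool list \<Rightarrow> bool list" where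
  "perm k n v = take k v @ drop (k + n) v @ take n (drop k v)"

lemma perm_perm: "length w = k + n + l \<Longrightarrow> perm k l (perm k n w) = w"
  by (simp add: perm_def min_def) (metis append_take_drop_id add.commute drop_drop)

lemma length_perm: "length w = k + n + l \<Longrightarrow> length (perm k n w) = k + n + l"
  by (simp add: perm_def)

lemma perm_iff: "length u = k + n + l \<Longrightarrow> length w = k + n + l \<Longrightarrow>
   (u = perm k n w) = (w = perm k l u)"
  by (metis perm_perm add.commute add.assoc)



lemma double_sum_gray:
  assumes "length u = N" "length v = N"
  shows "(\<Sum>i<2 ^ N. \<Sum>j<2 ^ N. grayM N u i * F i j * grayInvM N j v) = F (ginv u) (ginv v)"
proof -
  have "(\<Sum>i<2 ^ N. \<Sum>j<2 ^ N. grayM N u i * F i j * grayInvM N j v)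
      = (\<Sum>i<2 ^ N. grayM N u i * (\<Sum>j<2 ^ N. F i j * grayInvM N j v))"
    by (simp add: sum_distrib_left mult.assoc)
  also have "\<dots> = (\<Sum>i<2 ^ N. grayM N u i * F i (ginv v))"
    using grayInvM_sum[OF assms(2)] by simp
  also have "\<dots> = F (ginv u) (ginv v)" using grayM_sum[OF assms(1)] by simp
  finally show ?thesis .
qed

lemma sig_modes: "sigma_spec sig \<Longrightarrow> lmodes (sig k n l) = 2 ^ (k + n + l)"
  by (simp add: sigma_spec_def Let_def)

lemma sig_rep:
  assumes sp: "sigma_spec sig" and lu: "length u = k + n + l" and lv: "length v = k + n + l"
  shows "lsem (sig k n l) (ginv u) (ginv v) = (if u = perm k n v then 1 else 0)"
proof -
  define x where "x = take k v"
  define y where "y = take n (drop k v)"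
  define z where "z = drop (k + n) v"
  have v: "v = x @ y @ z" unfolding x_def y_def z_def
    by (metis append_take_drop_id drop_drop add.commute)
  have lens: "length x = k" "length y = n" "length z = l" using lv by (auto simp: x_def y_def z_def)
  have "x @ z @ y = perm k n v" by (simp add: perm_def x_def y_def z_def)
  moreover have "(\<Sum>i<2 ^ (k+n+l). \<Sum>j<2 ^ (k+n+l). grayM (k+n+l) u i * lsem (sig k n l) i j * grayInvM (k+n+l) j (x @ y @ z))
        = (if u = x @ z @ y then 1 else 0)"
    using sp lens lu unfolding sigma_spec_def Let_def by blast
  ultimately show ?thesis using double_sum_gray[OF lu, of v "lsem (sig k n l)"] lv v by simp
qed

definition emb :: "nat \<Rightarrow> nat \<Rightarrow> (bool list \<Rightarrow> bool list \<Rightarrow> complex) \<Rightarrow> bool list \<Rightarrow> bool list \<Rightarrow> complex" where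
  "emb k n M u v = (if take k u = take k v \<and> drop (k + n) u = drop (k + n) v
      then M (take n (drop k u)) (take n (drop k v)) else 0)"

lemma sum_pick_left:
  assumes "c \<in> S" "finite S"
  shows "(\<Sum>w\<in>S. (if w = c then 1 else 0) * F w) = (F c :: complex)"
proof -
  have "(\<Sum>w\<in>S. (if w = c then 1 else 0) * F w) = (\<Sum>w\<in>S. if w = c then F w else 0)"
    by (rule sum.cong) auto
  thus ?thesis using assms by (simp add: sum.delta)
qed

lemma sum_pick_right:
  assumes "c \<in> S" "finite S"
  shows "(\<Sum>w\<in>S. F w * (if w = c then 1 else 0)) = (F c :: complex)"
proof -
  have "(\<Sum>w\<in>S. F w * (if w = c then 1 else 0)) = (\<Sum>w\<in>S. if w = c then F w else 0)"
    by (rule sum.cong) auto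
  thus ?thesis using assms by (simp add: sum.delta)
qed

lemma split3: "length w = k + n + l \<Longrightarrow> w = take k w @ take n (drop k w) @ drop (k + n) w"
  by (metis append_take_drop_id drop_drop add.commute)

lemma emb_comp:
  assumes lu: "length u = k + n + l" and lv: "length v = k + n + l"
  shows "(\<Sum>w\<in>bitstrings (k + n + l). emb k n A u w * emb k n B w v)
       = emb k n (\<lambda>y x. \<Sum>z\<in>bitstrings n. A y z * B z x) u v"
proof (cases "take k u = take k v \<and> drop (k + n) u = drop (k + n) v")
  case False
  have "emb k n A u w * emb k n B w v = 0" for w
    using False by (auto simp: emb_def)
  then have "(\<Sum>w\<in>bitstrings (k + n + l). emb k n A u w * emb k n B w v) = 0"
    by (intro sum.neutral) blast
  moreover have "emb k n (\<lambda>y x. \<Sum>z\<in>bitstrings n. A y z * B z x) u v = 0"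
    using False unfolding emb_def by auto
  ultimately show ?thesis by simp
next
  case True
  define f where "f = (\<lambda>z. take k u @ z @ drop (k + n) u)"
  have inj: "inj_on f (bitstrings n)" by (auto simp: inj_on_def f_def bitstrings_def)
  have sub: "f ` bitstrings n \<subseteq> bitstrings (k + n + l)"
    using lu by (auto simp: f_def bitstrings_def)
  have zero: "\<forall>w\<in>bitstrings (k + n + l) - f ` bitstrings n. emb k n A u w * emb k n B w v = 0"
  proof
    fix w assume w: "w \<in> bitstrings (k + n + l) - f ` bitstrings n"
    show "emb k n A u w * emb k n B w v = 0"
    proof (rule ccontr)
      assume "emb k n A u w * emb k n B w v \<noteq> 0"
      then have c: "take k u = take k w" "drop (k + n) u = drop (k + n) w"
        by (auto simp: emb_def split: if_splits)
      have lw: "length w = k + n + l" using w by (simp add: bitstrings_def)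
      have "w = f (take n (drop k w))" using split3[OF lw] c by (simp add: f_def)
      moreover have "take n (drop k w) \<in> bitstrings n" using lw by (simp add: bitstrings_def)
      ultimately show False using w by blast
    qed
  qed
  have "(\<Sum>w\<in>bitstrings (k + n + l). emb k n A u w * emb k n B w v)
      = (\<Sum>w\<in>f ` bitstrings n. emb k n A u w * emb k n B w v)"
    by (rule sum.mono_neutral_right[OF finite_bitstrings sub zero])
  also have "\<dots> = (\<Sum>z\<in>bitstrings n. emb k n A u (f z) * emb k n B (f z) v)"
    by (simp add: sum.reindex[OF inj])
  also have "\<dots> = (\<Sum>z\<in>bitstrings n. A (take n (drop k u)) z * B z (take n (drop k v)))"
  proof (rule sum.cong)
    fix z assume z: "z \<in> bitstrings n"
    have lz: "length z = n" using z by (simp add: bitstrings_def)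
    have lt: "length (take k u) = k" using lu by simp
    show "emb k n A u (f z) * emb k n B (f z) v = A (take n (drop k u)) z * B z (take n (drop k v))"
      using True lz lt by (simp add: emb_def f_def)
  qed simp
  finally show ?thesis using True by (simp add: emb_def)
qed



definition idL :: "nat \<Rightarrow> (bool list \<Rightarrow> bool list \<Rightarrow> complex) \<Rightarrow> bool list \<Rightarrow> bool list \<Rightarrow> complex" where
  "idL n1 A y x = (if take n1 y = take n1 x then A (drop n1 y) (drop n1 x) else 0)"
definition idR :: "nat \<Rightarrow> (bool list \<Rightarrow> bool list \<Rightarrow> complex) \<Rightarrow> bool list \<Rightarrow> bool list \<Rightarrow> complex" where
  "idR n1 B y x = (if drop n1 y = drop n1 x then B (take n1 y) (take n1 x) else 0)"

lemma take_eq_split: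
  "length u = length v \<Longrightarrow> k \<le> length u \<Longrightarrow>
   (take (k + m) u = take (k + m) v) = (take k u = take k v \<and> take m (drop k u) = take m (drop k v))"
  proof -
  assume a: "length u = length v" "k \<le> length u"
  have "(take k u @ take m (drop k u) = take k v @ take m (drop k v)) = (take k u = take k v \<and> take m (drop k u) = take m (drop k v))"
    using a by (intro append_eq_append_conv) simp
  thus ?thesis by (simp add: take_add)
qed

lemma drop_eq_split:
  "length u = length v \<Longrightarrow>
   (drop k u = drop k v) = (take m (drop k u) = take m (drop k v) \<and> drop (k + m) u = drop (k + m) v)"
  proof -
  assume a: "length u = length v"
  have "(take m (drop k u) @ drop m (drop k u) = take m (drop k v) @ drop m (drop k v)) = (take m (drop k u) = take m (drop k v) \<and> drop m (drop k u) = drop m (drop k v))"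
    using a by (intro append_eq_append_conv) simp
  moreover have du: "take m (drop k w) @ drop (k+m) w = drop k w" for w :: "'a list"
    by (metis append_take_drop_id drop_drop add.commute)
  ultimately show ?thesis by (simp only: du drop_drop add.commute[of m k])
qed

lemma emb_shiftL:
  assumes "length u = k + n1 + n2 + l" "length v = k + n1 + n2 + l"
  shows "emb (k + n1) n2 A u v = emb k (n1 + n2) (idL n1 A) u v"
proof -
  have e1: "(take (k + n1) u = take (k + n1) v) = (take k u = take k v \<and> take n1 (drop k u) = take n1 (drop k v))"
    using assms by (intro take_eq_split) auto
  have t1: "take n1 (take (n1 + n2) (drop k w)) = take n1 (drop k w)" for w :: "bool list"
    by (simp add: min_def)
  have t2: "drop n1 (take (n1 + n2) (drop k w)) = take n2 (drop (k + n1) w)" for w :: "bool list"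
    by (simp add: drop_take add.commute)
  show ?thesis unfolding emb_def idL_def e1 t1 t2 by (simp add: add.assoc)
qed

lemma emb_shiftR:
  assumes "length u = k + n1 + n2 + l" "length v = k + n1 + n2 + l"
  shows "emb k n1 B u v = emb k (n1 + n2) (idR n1 B) u v"
proof -
  have e1: "(drop (k + n1) u = drop (k + n1) v) = (take n2 (drop (k + n1) u) = take n2 (drop (k+n1) v) \<and> drop (k + n1 + n2) u = drop (k + n1 + n2) v)"
    using assms by (intro drop_eq_split) auto
  have t1: "take n1 (take (n1 + n2) (drop k w)) = take n1 (drop k w)" for w :: "bool list"
    by (simp add: min_def)
  have t2: "drop n1 (take (n1 + n2) (drop k w)) = take n2 (drop (k + n1) w)" for w :: "bool list"
    by (simp add: drop_take add.commute)
  show ?thesis unfolding emb_def idR_def e1 t1 t2 by (auto simp: add.assoc)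
qed

lemma tens_sum:
  assumes ly: "length y = n1 + n2" and lx: "length x = n1 + n2"
  shows "(\<Sum>z\<in>bitstrings (n1 + n2). idL n1 A y z * idR n1 B z x) = B (take n1 y) (take n1 x) * A (drop n1 y) (drop n1 x)"
proof -
  define c where "c = take n1 y @ drop n1 x"
  have cin: "c \<in> bitstrings (n1 + n2)" using ly lx by (simp add: c_def bitstrings_def)
  have "(\<Sum>z\<in>bitstrings (n1 + n2). idL n1 A y z * idR n1 B z x)
      = (\<Sum>z\<in>bitstrings (n1 + n2). if z = c then B (take n1 y) (take n1 x) * A (drop n1 y) (drop n1 x) else 0)"
  proof (rule sum.cong)
    fix z assume "z \<in> bitstrings (n1 + n2)"
    then have lz: "length z = n1 + n2" by (simp add: bitstrings_def)
    have iff: "(take n1 y = take n1 z \<and> drop n1 z = drop n1 x) = (z = c)"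
      using lz ly lx unfolding c_def
      by (metis append_eq_append_conv append_take_drop_id length_take)
    show "idL n1 A y z * idR n1 B z x = (if z = c then B (take n1 y) (take n1 x) * A (drop n1 y) (drop n1 x) else 0)"
      unfolding idL_def idR_def using iff[symmetric] by (auto simp: c_def)
  qed simp
  also have "\<dots> = B (take n1 y) (take n1 x) * A (drop n1 y) (drop n1 x)"
    using cin finite_bitstrings by (simp add: sum.delta)
  finally show ?thesis .
qed



lemma ginv_append:
  "ginv (a @ b) = 2 ^ length b * ginv a + (if even (ginv a) then ginv b else 2 ^ length b - 1 - ginv b)"
proof (induction a)
  case Nil thus ?case by simp
next
  case (Cons x a)
  show ?case
  proof (cases x)
    case False thus ?thesis using Cons by simp
  next
    case True
    define P :: nat where "P = 2 ^ length b"
    define Q :: nat where "Q = 2 ^ length a"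
    define g where "g = ginv a"
    define gb where "gb = ginv b"
    define h where "h = 2 * Q - 1 - g"
    have gQ: "g < Q" using ginv_lt[of a] by (simp add: g_def Q_def)
    have gbP: "gb < P" using ginv_lt[of b] by (simp add: gb_def P_def)
    have gh: "g + h + 1 = 2 * Q" using gQ by (simp add: h_def)
    have Pgh: "P * g + P * h + P = 2 * (P * Q)"
    proof -
      have "P * (g + h + 1) = P * (2 * Q)" using gh by simp
      thus ?thesis by (simp add: algebra_simps)
    qed
    have pw: "(2::nat) ^ Suc (length (a @ b)) = 2 * (P * Q)"
      by (simp add: P_def Q_def power_add)
    have pa: "(2::nat) ^ Suc (length a) - 1 - ginv a = h" by (simp add: h_def Q_def g_def)
    have par: "even h = odd g" using gh by presburger
    have lt1: "P * g + P \<le> 2 * (P * Q)" using Pgh by simp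
    have IH: "ginv (a @ b) = P * g + (if even g then gb else P - 1 - gb)"
      using Cons by (simp add: P_def g_def gb_def)
    show ?thesis
    proof (cases "even g")
      case True
      have "ginv ((x # a) @ b) = 2 * (P * Q) - 1 - (P * g + gb)"
        using \<open>x\<close> IH True pw by simp
      also have "\<dots> = P * h + (P - 1 - gb)" using Pgh gbP by simp
      finally show ?thesis using \<open>x\<close> True pa par by (simp add: P_def gb_def g_def)
    next
      case False
      have "ginv ((x # a) @ b) = 2 * (P * Q) - 1 - (P * g + (P - 1 - gb))"
        using \<open>x\<close> IH False pw by simp
      also have "\<dots> = P * h + gb" using Pgh gbP by simp
      finally show ?thesis using \<open>x\<close> False pa par by (simp add: P_def gb_def g_def)
    qed
  qed
qed

lemma lmodes_lpow: "lmodes (lpow B c) = c * lmodes B"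
  by (induction c) auto

lemma lpow_block:
  assumes "lmodes B = bs" "r < bs" "r' < bs"
  shows "p < c \<Longrightarrow> p' < c \<Longrightarrow> lsem (lpow B c) (bs * p + r) (bs * p' + r') = (if p = p' then lsem B r r' else 0)"
proof (induction c arbitrary: p p')
  case 0 thus ?case by simp
next
  case (Suc c)
  show ?case
  proof (cases "p = 0")
    case True
    show ?thesis
    proof (cases "p' = 0")
      case True thus ?thesis using \<open>p = 0\<close> assms by simp
    next
      case False
      have "bs \<le> bs * p' + r'" using False by (cases p') auto
      thus ?thesis using True False assms by auto
    qed
  next
    case False
    have ge: "bs \<le> bs * p + r" using False by (cases p) auto
    show ?thesis
    proof (cases "p' = 0")
      case True thus ?thesis using False ge assms by auto
    next
      case False': False
      have ge': "bs \<le> bs * p' + r'" using False' by (cases p') auto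
      obtain q q' where q: "p = Suc q" "p' = Suc q'" using False False' by (metis not0_implies_Suc)
      have e1: "bs * p + r - bs = bs * q + r" "bs * p' + r' - bs = bs * q' + r'" using q by simp_all
      have "lsem (lpow B (Suc c)) (bs * p + r) (bs * p' + r') = lsem (lpow B c) (bs * q + r) (bs * q' + r')"
        using ge ge' assms by (simp add: e1)
      also have "\<dots> = (if q = q' then lsem B r r' else 0)" using Suc q by simp
      finally show ?thesis using q by simp
    qed
  qed
qed


lemma exp_mhalfpi: "exp (\<i> * complex_of_real (- pi / 2)) = - \<i>"
proof -
  have "exp (\<i> * complex_of_real (- pi / 2)) = cis (- pi / 2)" by (simp add: cis_conv_exp)
  also have "\<dots> = - \<i>" by (simp add: cis.ctr complex_eq_iff)
  finally show ?thesis .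
qed
lemma exp_mhalfpi2: "exp (- (\<i> * complex_of_real pi / 2)) = - \<i>"
  using exp_mhalfpi by simp

lemma sq2: "complex_of_real (sqrt 2) * complex_of_real (sqrt 2) = 2"
proof -
  have "complex_of_real (sqrt 2 * sqrt 2) = 2" by simp
  thus ?thesis by (simp only: of_real_mult)
qed

definition rr :: "nat \<Rightarrow> bool \<Rightarrow> bool list \<Rightarrow> nat" where
  "rr d e b = (if e then ginv b else 2 ^ d + (2 ^ d - 1 - ginv b))"

lemmas lsimps = BH_def EH00_def BP_def BC_def numeral_2_eq_2 exp_mhalfpi exp_mhalfpi2 cos_45 sin_45

lemma BH_gate: "lsem BH (rr 1 e [b]) (rr 1 e [b']) = qsem QH [b] [b']"
  by (cases e; cases b; cases b'; simp add: rr_def lsimps field_simps sq2)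

lemma BH_bd: "r < 2 \<Longrightarrow> 2 \<le> r' \<Longrightarrow> r' < 4 \<Longrightarrow> lsem BH r r' = 0 \<and> lsem BH r' r = 0"
proof -
  assume "r < 2" "2 \<le> r'" "r' < 4"
  then have "r = 0 \<or> r = 1" "r' = 2 \<or> r' = 3" by auto
  thus ?thesis by (elim disjE; simp add: lsimps)
qed

lemma EH00_gate: "lsem EH00 (ginv [b]) (ginv [b']) = qsem QH [b] [b']"
  by (cases b; cases b'; simp add: lsimps field_simps sq2)

lemma BP_gate: "lsem (BP \<phi>) (rr 1 e [b]) (rr 1 e [b']) = qsem (QP \<phi>) [b] [b']"
  by (cases e; cases b; cases b'; simp add: rr_def lsimps bitval_def)

lemma BP_bd: "r < 2 \<Longrightarrow> 2 \<le> r' \<Longrightarrow> r' < 4 \<Longrightarrow> lsem (BP \<phi>) r r' = 0 \<and> lsem (BP \<phi>) r' r = 0"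
proof -
  assume "r < 2" "2 \<le> r'" "r' < 4"
  then have "r = 0 \<or> r = 1" "r' = 2 \<or> r' = 3" by auto
  thus ?thesis by (elim disjE; simp add: lsimps)
qed

lemma P00_gate: "lsem (LTens LId (Lph \<phi>)) (ginv [b]) (ginv [b']) = qsem (QP \<phi>) [b] [b']"
  by (cases b; cases b'; simp add: bitval_def)

lemma C00_gate: "lsem (LTens LId (LTens LId LSw)) (ginv [b1, b2]) (ginv [c1, c2]) = qsem QCNOT [b1, b2] [c1, c2]"
  by (cases b1; cases b2; cases c1; cases c2; simp)


lemma BC_bd: "r < 4 \<Longrightarrow> 4 \<le> r' \<Longrightarrow> r' < 8 \<Longrightarrow> lsem BC r r' = 0 \<and> lsem BC r' r = 0"
proof -
  assume "r < 4" "4 \<le> r'" "r' < 8"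
  then have "r = 0 \<or> r = 1 \<or> r = 2 \<or> r = 3" "r' = 4 \<or> r' = 5 \<or> r' = 6 \<or> r' = 7" by auto
  thus ?thesis by (elim disjE; simp add: BC_def)
qed


lemma BC_gate: "lsem BC (rr 2 e [b1, b2]) (rr 2 e [c1, c2]) = qsem QCNOT [b1, b2] [c1, c2]"
  by (cases e; cases b1; cases b2; cases c1; cases c2; simp add: rr_def lsimps)




lemma rr_lt: "length b = d \<Longrightarrow> rr d e b < 2 ^ (d + 1)"
  using ginv_lt[of b] by (auto simp: rr_def)

lemma ginv_app_block:
  assumes "length b = d"
  shows "ginv (a @ b) = 2 ^ (d + 1) * (ginv a div 2) + rr d (even (ginv a)) b"
proof -
  have g: "ginv b < 2 ^ d" using ginv_lt[of b] assms by simp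
  have e: "ginv (a @ b) = 2 ^ d * ginv a + (if even (ginv a) then ginv b else 2 ^ d - 1 - ginv b)"
    using ginv_append[of a b] assms by simp
  show ?thesis
  proof (cases "even (ginv a)")
    case True
    define X where "X = ginv a div 2"
    have "ginv a = 2 * X" using True by (simp add: X_def)
    moreover have "2 ^ d * (2 * X) = 2 ^ (d + 1) * X" by simp
    ultimately have "2 ^ d * ginv a = 2 ^ (d + 1) * (ginv a div 2)" by (simp add: X_def)
    thus ?thesis using e True by (simp add: rr_def)
  next
    case False
    define X where "X = ginv a div 2"
    have "ginv a = 2 * X + 1" using False unfolding X_def by presburger
    moreover have "2 ^ d * (2 * X + 1) = 2 ^ (d + 1) * X + 2 ^ d" by (simp add: algebra_simps)
    ultimately have "2 ^ d * ginv a = 2 ^ (d + 1) * (ginv a div 2) + 2 ^ d" by (simp add: X_def)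
    thus ?thesis using e False by (simp add: rr_def)
  qed
qed

lemma lpow_rep:
  assumes mB: "lmodes B = 2 ^ (d + 1)"
    and bd: "\<And>r r'. r < 2 ^ d \<Longrightarrow> 2 ^ d \<le> r' \<Longrightarrow> r' < 2 ^ (d + 1) \<Longrightarrow> lsem B r r' = 0 \<and> lsem B r' r = 0"
    and m: "1 \<le> m" and la: "length a = m" and la': "length a' = m"
    and lb: "length b = d" and lb': "length b' = d"
  shows "lsem (lpow B (2 ^ (m - 1))) (ginv (a @ b)) (ginv (a' @ b'))
       = (if a = a' then lsem B (rr d (even (ginv a)) b) (rr d (even (ginv a)) b') else 0)"
proof -
  define q where "q = ginv a"
  define q' where "q' = ginv a'"
  have qlt: "q div 2 < 2 ^ (m - 1)" "q' div 2 < 2 ^ (m - 1)"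
  proof -
    have "(2::nat) ^ m = 2 * 2 ^ (m - 1)" using m by (metis One_nat_def Suc_pred not_one_le_zero not_gr0 power_Suc)
    thus "q div 2 < 2 ^ (m - 1)" "q' div 2 < 2 ^ (m - 1)"
      using ginv_lt[of a] ginv_lt[of a'] la la' by (simp_all add: q_def q'_def)
  qed
  have "lsem (lpow B (2 ^ (m - 1))) (ginv (a @ b)) (ginv (a' @ b'))
      = lsem (lpow B (2 ^ (m - 1))) (2 ^ (d + 1) * (q div 2) + rr d (even q) b) (2 ^ (d + 1) * (q' div 2) + rr d (even q') b')"
    by (simp add: ginv_app_block[OF lb] ginv_app_block[OF lb'] q_def q'_def)
  also have "\<dots> = (if q div 2 = q' div 2 then lsem B (rr d (even q) b) (rr d (even q') b') else 0)"
    by (rule lpow_block[OF mB rr_lt[OF lb] rr_lt[OF lb'] qlt])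
  also have "\<dots> = (if a = a' then lsem B (rr d (even q) b) (rr d (even q) b') else 0)"
  proof (cases "a = a'")
    case True thus ?thesis by (simp add: q_def q'_def)
  next
    case False
    then have qq: "q \<noteq> q'" using ginv_inj la la' by (auto simp: q_def q'_def)
    show ?thesis
    proof (cases "q div 2 = q' div 2")
      case False thus ?thesis using \<open>a \<noteq> a'\<close> by simp
    next
      case True
      then have par: "even q \<noteq> even q'" using qq by (metis div_mult_mod_eq even_iff_mod_2_eq_zero odd_iff_mod_2_eq_one)
      have g1: "ginv b < 2 ^ d" "ginv b' < 2 ^ d" using ginv_lt[of b] ginv_lt[of b'] lb lb' by auto
      have "lsem B (rr d (even q) b) (rr d (even q') b') = 0"
      proof (cases "even q")
        case True
        then have "\<not> even q'" using par by simp
        then show ?thesis using bd[of "rr d True b" "rr d False b'"] g1 True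
          by (simp add: rr_def)
      next
        case False
        then have "even q'" using par by simp
        then show ?thesis using bd[of "rr d True b'" "rr d False b"] g1 False
          by (simp add: rr_def)
      qed
      thus ?thesis using True \<open>a \<noteq> a'\<close> by simp
    qed
  qed
  finally show ?thesis by (simp add: q_def)
qed



lemma gate_general:
  assumes sp: "sigma_spec sig"
    and mB: "lmodes B = 2 ^ (d + 1)"
    and bd: "\<And>r r'. r < 2 ^ d \<Longrightarrow> 2 ^ d \<le> r' \<Longrightarrow> r' < 2 ^ (d + 1) \<Longrightarrow> lsem B r r' = 0 \<and> lsem B r' r = 0"
    and gate: "\<And>e b b'. length b = d \<Longrightarrow> length b' = d \<Longrightarrow> lsem B (rr d e b) (rr d e b') = M b b'"
    and kl: "k + l \<noteq> 0" and lu: "length u = k + d + l" and lv: "length v = k + d + l"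
  shows "lsem (LComp (sig k l d) (LComp (lpow B (2 ^ (k + l - 1))) (sig k d l))) (ginv u) (ginv v) = emb k d M u v"
proof -
  let ?N = "k + d + l"
  let ?L = "lpow B (2 ^ (k + l - 1))"
  have m1: "lmodes (LComp ?L (sig k d l)) = 2 ^ ?N" using sig_modes[OF sp] by simp
  have m2: "lmodes (sig k d l) = 2 ^ ?N" using sig_modes[OF sp] by simp
  define w0 where "w0 = perm k d u"
  define w1 where "w1 = perm k d v"
  have w0in: "w0 \<in> bitstrings ?N" using lu by (simp add: w0_def bitstrings_def perm_def)
  have w1in: "w1 \<in> bitstrings ?N" using lv by (simp add: w1_def bitstrings_def perm_def)
  have s1: "lsem (LComp (sig k l d) (LComp ?L (sig k d l))) (ginv u) (ginv v)
      = (\<Sum>w\<in>bitstrings ?N. (if w = w0 then 1 else 0) * lsem (LComp ?L (sig k d l)) (ginv w) (ginv v))"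
  proof -
    have "lsem (LComp (sig k l d) (LComp ?L (sig k d l))) (ginv u) (ginv v)
      = (\<Sum>w\<in>bitstrings ?N. lsem (sig k l d) (ginv u) (ginv w) * lsem (LComp ?L (sig k d l)) (ginv w) (ginv v))"
      by (rule lsem_comp_rep[OF m1])
    also have "\<dots> = (\<Sum>w\<in>bitstrings ?N. (if w = w0 then 1 else 0) * lsem (LComp ?L (sig k d l)) (ginv w) (ginv v))"
    proof (rule sum.cong)
      fix w assume "w \<in> bitstrings ?N"
      then have lw: "length w = k + l + d" by (simp add: bitstrings_def)
      have lu': "length u = k + l + d" using lu by simp
      have "lsem (sig k l d) (ginv u) (ginv w) = (if u = perm k l w then 1 else 0)"
        by (rule sig_rep[OF sp lu' lw])
      also have "\<dots> = (if w = w0 then 1 else 0)" using perm_iff[OF lu' lw] by (simp add: w0_def)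
      finally show "lsem (sig k l d) (ginv u) (ginv w) * lsem (LComp ?L (sig k d l)) (ginv w) (ginv v)
          = (if w = w0 then 1 else 0) * lsem (LComp ?L (sig k d l)) (ginv w) (ginv v)" by simp
    qed simp
    finally show ?thesis .
  qed
  have s2: "lsem (LComp ?L (sig k d l)) (ginv w0) (ginv v) = lsem ?L (ginv w0) (ginv w1)"
  proof -
    have "lsem (LComp ?L (sig k d l)) (ginv w0) (ginv v)
       = (\<Sum>w\<in>bitstrings ?N. lsem ?L (ginv w0) (ginv w) * lsem (sig k d l) (ginv w) (ginv v))"
      by (rule lsem_comp_rep[OF m2])
    also have "\<dots> = (\<Sum>w\<in>bitstrings ?N. lsem ?L (ginv w0) (ginv w) * (if w = w1 then 1 else 0))"
    proof (rule sum.cong)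
      fix w assume "w \<in> bitstrings ?N"
      then have lw: "length w = k + d + l" by (simp add: bitstrings_def)
      show "lsem ?L (ginv w0) (ginv w) * lsem (sig k d l) (ginv w) (ginv v)
          = lsem ?L (ginv w0) (ginv w) * (if w = w1 then 1 else 0)"
        using sig_rep[OF sp lw lv] by (simp add: w1_def)
    qed simp
    also have "\<dots> = lsem ?L (ginv w0) (ginv w1)" by (rule sum_pick_right[OF w1in finite_bitstrings])
    finally show ?thesis .
  qed
  define a where "a = take k u @ drop (k + d) u"
  define b where "b = take d (drop k u)"
  define a' where "a' = take k v @ drop (k + d) v"
  define b' where "b' = take d (drop k v)"
  have w0ab: "w0 = a @ b" by (simp add: w0_def perm_def a_def b_def)
  have w1ab: "w1 = a' @ b'" by (simp add: w1_def perm_def a'_def b'_def)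
  have la: "length a = k + l" "length a' = k + l" using lu lv by (simp_all add: a_def a'_def)
  have lb: "length b = d" "length b' = d" using lu lv by (simp_all add: b_def b'_def)
  have m: "1 \<le> k + l" using kl by linarith
  have s3: "lsem ?L (ginv w0) (ginv w1) = (if a = a' then lsem B (rr d (even (ginv a)) b) (rr d (even (ginv a)) b') else 0)"
    unfolding w0ab w1ab by (rule lpow_rep[OF mB bd m la lb]) auto
  have aa: "(a = a') = (take k u = take k v \<and> drop (k + d) u = drop (k + d) v)"
    unfolding a_def a'_def using lu lv by (intro append_eq_append_conv) simp
  have "lsem (LComp (sig k l d) (LComp ?L (sig k d l))) (ginv u) (ginv v) = lsem (LComp ?L (sig k d l)) (ginv w0) (ginv v)"
    using s1 sum_pick_left[OF w0in finite_bitstrings] by simp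
  also have "\<dots> = (if a = a' then M b b' else 0)" using s2 s3 gate[OF lb] by simp
  also have "\<dots> = emb k d M u v" unfolding emb_def aa b_def b'_def by simp
  finally show ?thesis .
qed



lemma len1: "length b = Suc 0 \<Longrightarrow> \<exists>x. b = [x]"
  by (cases b) auto

lemma len2: "length b = 2 \<Longrightarrow> \<exists>x y. b = [x, y]"
  by (cases b; cases "tl b") auto

lemma emb_cong:
  assumes "\<And>y x. length y = n \<Longrightarrow> length x = n \<Longrightarrow> M y x = M' y x"
    and "length u = k + n + l" "length v = k + n + l"
  shows "emb k n M u v = emb k n M' u v"
  using assms by (simp add: emb_def)

lemma eq_split3:
  assumes "length u = length v"
  shows "(take k u = take k v \<and> drop (k + n) u = drop (k + n) v \<and> take n (drop k u) = take n (drop k v)) = (u = v)"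
proof
  assume h: "take k u = take k v \<and> drop (k + n) u = drop (k + n) v \<and> take n (drop k u) = take n (drop k v)"
  have "drop k u = drop k v" using drop_eq_split[OF assms, of k n] h by simp
  thus "u = v" using h by (metis append_take_drop_id)
qed simp

lemma lpow_diag:
  assumes "lmodes B = 1" "ginv u < c" "ginv v < c" "length u = length v"
  shows "lsem (lpow B c) (ginv u) (ginv v) = (if u = v then lsem B 0 0 else 0)"
proof -
  have "lsem (lpow B c) (1 * ginv u + 0) (1 * ginv v + 0) = (if ginv u = ginv v then lsem B 0 0 else 0)"
    by (rule lpow_block) (use assms in auto)
  thus ?thesis using ginv_inj[OF assms(4)] by auto
qed

lemma gate1:
  assumes "\<And>e x y. lsem B (rr 1 e [x]) (rr 1 e [y]) = M [x] [y]" "length b = 1" "length b' = 1"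
  shows "lsem B (rr 1 e b) (rr 1 e b') = M b b'"
proof -
  obtain x y where "b = [x]" "b' = [y]" using len1[of b] len1[of b'] assms(2,3) by auto
  thus ?thesis using assms(1) by simp
qed

lemma gate2:
  assumes "\<And>e x y x' y'. lsem B (rr 2 e [x, y]) (rr 2 e [x', y']) = M [x, y] [x', y']" "length b = 2" "length b' = 2"
  shows "lsem B (rr 2 e b) (rr 2 e b') = M b b'"
proof -
  obtain x y x' y' where "b = [x, y]" "b' = [x', y']" using len2[of b] len2[of b'] assms(2,3) by auto
  thus ?thesis using assms(1) by simp
qed

lemma decomp2: "length v = k + 2 + l \<Longrightarrow> \<exists>x a b z. v = x @ [a, b] @ z \<and> length x = k \<and> length z = l"
proof -
  assume lv: "length v = k + 2 + l"
  have "length (take 2 (drop k v)) = 2" using lv by simp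
  then obtain a b where ab: "take 2 (drop k v) = [a, b]" using len2 by blast
  have "v = take k v @ [a, b] @ drop (k + 2) v" using split3[OF lv] ab by simp
  moreover have "length (take k v) = k" "length (drop (k + 2) v) = l" using lv by simp_all
  ultimately show ?thesis by blast
qed

lemma swap_perm: "length x = k \<Longrightarrow> length z = l \<Longrightarrow>
  perm k l (perm (k + l) 1 (perm k 2 (x @ [a, b] @ z))) = x @ [b, a] @ z"
  by (simp add: perm_def)

lemma emb00: "length u = n \<Longrightarrow> length v = n \<Longrightarrow> emb 0 n M u v = M u v"
  by (simp add: emb_def)

lemma ginv_lt2: "length u = N \<Longrightarrow> ginv u < 2 ^ N"
  using ginv_lt by auto

lemma main_lemma:
  assumes sp: "sigma_spec sig"
  shows "qwf C \<Longrightarrow> lmodes (enc sig k l C) = 2 ^ (k + qwires C + l) \<and>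
     (\<forall>u v. length u = k + qwires C + l \<longrightarrow> length v = k + qwires C + l \<longrightarrow>
        lsem (enc sig k l C) (ginv u) (ginv v) = emb k (qwires C) (qsem C) u v)"
proof (induction C arbitrary: k l)
  case QH
  show ?case
  proof (cases "k = 0 \<and> l = 0")
    case True
    have "lsem EH00 (ginv u) (ginv v) = emb 0 1 (qsem QH) u v" if "length u = 1" "length v = 1" for u v
    proof -
      from len1[of u] len1[of v] that obtain x y where u: "u = [x]" and v: "v = [y]" by auto
      have "lsem (EH00) (ginv u) (ginv v) = qsem (QH) u v" unfolding u v by (rule EH00_gate)
      thus ?thesis using emb00[of u 1 v] that by simp
    qed
    moreover have "lmodes EH00 = 2" by (simp add: EH00_def)
    ultimately show ?thesis using True by (simp del: lsem.simps qsem.simps)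
  next
    case False
    have gg: "lsem (LComp (sig k l 1) (LComp (lpow BH (2 ^ (k + l - 1))) (sig k 1 l))) (ginv u) (ginv v) = emb k 1 (qsem QH) u v"
      if "length u = k + 1 + l" "length v = k + 1 + l" for u v
    proof (rule gate_general[OF sp])
      show "lmodes BH = 2 ^ (1 + 1)" by (simp add: BH_def EH00_def)
      show "\<And>r r'. r < 2 ^ 1 \<Longrightarrow> 2 ^ 1 \<le> r' \<Longrightarrow> r' < 2 ^ (1 + 1) \<Longrightarrow> lsem BH r r' = 0 \<and> lsem BH r' r = 0"
        using BH_bd by simp
      show "\<And>e b b'. length b = 1 \<Longrightarrow> length b' = 1 \<Longrightarrow> lsem BH (rr 1 e b) (rr 1 e b') = qsem QH b b'"
        by (rule gate1[OF BH_gate])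
    qed (use False that in auto)
    have ee: "enc sig k l QH = LComp (sig k l 1) (LComp (lpow BH (2 ^ (k + l - 1))) (sig k 1 l))"
      by (simp only: enc.simps if_not_P[OF False])
    have lm: "lmodes (enc sig k l QH) = 2 ^ (k + qwires QH + l)" unfolding ee using sig_modes[OF sp] by simp
    show ?thesis using lm gg unfolding ee by (simp del: lsem.simps qsem.simps)
  qed
next
  case (QP \<phi>)
  show ?case
  proof (cases "k = 0 \<and> l = 0")
    case True
    have "lsem (LTens LId (Lph \<phi>)) (ginv u) (ginv v) = emb 0 1 (qsem (QP \<phi>)) u v" if "length u = 1" "length v = 1" for u v
    proof -
      from len1[of u] len1[of v] that obtain x y where u: "u = [x]" and v: "v = [y]" by auto
      have "lsem (LTens LId (Lph \<phi>)) (ginv u) (ginv v) = qsem (QP \<phi>) u v" unfolding u v by (rule P00_gate)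
      thus ?thesis using emb00[of u 1 v] that by simp
    qed
    then show ?thesis using True by (simp del: lsem.simps qsem.simps)
  next
    case False
    have gg: "lsem (LComp (sig k l 1) (LComp (lpow (BP \<phi>) (2 ^ (k + l - 1))) (sig k 1 l))) (ginv u) (ginv v) = emb k 1 (qsem (QP \<phi>)) u v"
      if "length u = k + 1 + l" "length v = k + 1 + l" for u v
    proof (rule gate_general[OF sp])
      show "lmodes (BP \<phi>) = 2 ^ (1 + 1)" by (simp add: BP_def)
      show "\<And>r r'. r < 2 ^ 1 \<Longrightarrow> 2 ^ 1 \<le> r' \<Longrightarrow> r' < 2 ^ (1 + 1) \<Longrightarrow> lsem (BP \<phi>) r r' = 0 \<and> lsem (BP \<phi>) r' r = 0"
        using BP_bd by simp
      show "\<And>e b b'. length b = 1 \<Longrightarrow> length b' = 1 \<Longrightarrow> lsem (BP \<phi>) (rr 1 e b) (rr 1 e b') = qsem (QP \<phi>) b b'"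
        by (rule gate1[OF BP_gate])
    qed (use False that in auto)
    have ee: "enc sig k l (QP \<phi>) = LComp (sig k l 1) (LComp (lpow (BP \<phi>) (2 ^ (k + l - 1))) (sig k 1 l))"
      by (simp only: enc.simps if_not_P[OF False])
    have lm: "lmodes (enc sig k l (QP \<phi>)) = 2 ^ (k + qwires (QP \<phi>) + l)" unfolding ee using sig_modes[OF sp] by simp
    show ?thesis using lm gg unfolding ee by (simp del: lsem.simps qsem.simps)
  qed
next
  case QCNOT
  show ?case
  proof (cases "k = 0 \<and> l = 0")
    case True
    have "lsem (LTens LId (LTens LId LSw)) (ginv u) (ginv v) = emb 0 2 (qsem QCNOT) u v" if "length u = 2" "length v = 2" for u v
    proof -
      from len2[of u] len2[of v] that obtain x y x' y' where u: "u = [x, y]" and v: "v = [x', y']" by auto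
      have "lsem (LTens LId (LTens LId LSw)) (ginv u) (ginv v) = qsem QCNOT u v" unfolding u v by (rule C00_gate)
      thus ?thesis using emb00[of u 2 v] that by simp
    qed
    then show ?thesis using True by (simp del: lsem.simps qsem.simps)
  next
    case False
    have gg: "lsem (LComp (sig k l 2) (LComp (lpow BC (2 ^ (k + l - 1))) (sig k 2 l))) (ginv u) (ginv v) = emb k 2 (qsem QCNOT) u v"
      if "length u = k + 2 + l" "length v = k + 2 + l" for u v
    proof (rule gate_general[OF sp])
      show "lmodes BC = 2 ^ (2 + 1)" by (simp add: BC_def)
      show "\<And>r r'. r < 2 ^ 2 \<Longrightarrow> 2 ^ 2 \<le> r' \<Longrightarrow> r' < 2 ^ (2 + 1) \<Longrightarrow> lsem BC r r' = 0 \<and> lsem BC r' r = 0"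
        using BC_bd by simp
      show "\<And>e b b'. length b = 2 \<Longrightarrow> length b' = 2 \<Longrightarrow> lsem BC (rr 2 e b) (rr 2 e b') = qsem QCNOT b b'"
        by (rule gate2[OF BC_gate])
    qed (use False that in auto)
    have ee: "enc sig k l QCNOT = LComp (sig k l 2) (LComp (lpow BC (2 ^ (k + l - 1))) (sig k 2 l))"
      by (simp only: enc.simps if_not_P[OF False])
    have lm: "lmodes (enc sig k l QCNOT) = 2 ^ (k + qwires QCNOT + l)" unfolding ee using sig_modes[OF sp] by simp
    show ?thesis using lm gg unfolding ee by (simp del: lsem.simps qsem.simps)
  qed
next
  case (QScal \<phi>)
  have "lsem (lpow (Lph \<phi>) (2 ^ (k + l))) (ginv u) (ginv v) = emb k 0 (qsem (QScal \<phi>)) u v"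
    if "length u = k + l" "length v = k + l" for u v
  proof -
    have "lsem (lpow (Lph \<phi>) (2 ^ (k + l))) (ginv u) (ginv v) = (if u = v then lsem (Lph \<phi>) 0 0 else 0)"
      by (rule lpow_diag) (use that ginv_lt2[OF that(1)] ginv_lt2[OF that(2)] in auto)
    moreover have "(take k u = take k v \<and> drop k u = drop k v) = (u = v)"
      by (metis append_take_drop_id)
    ultimately show ?thesis by (simp add: emb_def)
  qed
  then show ?case by (simp add: lmodes_lpow del: lsem.simps qsem.simps)
next
  case QEmpty
  have "lsem (lpow LId (2 ^ (k + l))) (ginv u) (ginv v) = emb k 0 (qsem QEmpty) u v"
    if "length u = k + l" "length v = k + l" for u v
  proof -
    have "lsem (lpow LId (2 ^ (k + l))) (ginv u) (ginv v) = (if u = v then lsem LId 0 0 else 0)"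
      by (rule lpow_diag) (use that ginv_lt2[OF that(1)] ginv_lt2[OF that(2)] in auto)
    moreover have "(take k u = take k v \<and> drop k u = drop k v) = (u = v)"
      by (metis append_take_drop_id)
    ultimately show ?thesis by (simp add: emb_def)
  qed
  then show ?case by (simp add: lmodes_lpow del: lsem.simps qsem.simps)
next
  case QId
  have "lsem (lpow LId (2 ^ (k + l + 1))) (ginv u) (ginv v) = emb k 1 (qsem QId) u v"
    if "length u = k + 1 + l" "length v = k + 1 + l" for u v
  proof -
    have "lsem (lpow LId (2 ^ (k + l + 1))) (ginv u) (ginv v) = (if u = v then lsem LId 0 0 else 0)"
      by (rule lpow_diag) (use that ginv_lt2[of u "k + l + 1"] ginv_lt2[of v "k + l + 1"] in auto)
    moreover have "(take k u = take k v \<and> drop (k + 1) u = drop (k + 1) v \<and> take 1 (drop k u) = take 1 (drop k v)) = (u = v)"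
      using eq_split3[of u v k 1] that by simp
    ultimately show ?thesis by (auto simp: emb_def)
  qed
  then show ?case by (simp add: lmodes_lpow del: lsem.simps qsem.simps)
next
  case QSW
  let ?N = "k + 2 + l"
  have m1: "lmodes (LComp (sig (k + l) 1 1) (sig k 2 l)) = 2 ^ ?N" using sig_modes[OF sp] by simp
  have m2: "lmodes (sig k 2 l) = 2 ^ ?N" using sig_modes[OF sp] by simp
  have rep: "lsem (LComp (sig k l 2) (LComp (sig (k + l) 1 1) (sig k 2 l))) (ginv u) (ginv v) = emb k 2 (qsem QSW) u v"
    if lu: "length u = k + 2 + l" and lv: "length v = k + 2 + l" for u v
  proof -
    define P where "P = perm (k + l) 1 (perm k 2 v)"
    have lP: "length P = k + 2 + l" using lv by (simp add: P_def perm_def)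
    have Pin: "P \<in> bitstrings ?N" using lP by (simp add: bitstrings_def)
    have p2in: "perm k 2 v \<in> bitstrings ?N" using lv by (simp add: perm_def bitstrings_def)
    have inner: "lsem (LComp (sig (k + l) 1 1) (sig k 2 l)) (ginv w) (ginv v) = (if w = P then 1 else 0)"
      if lw: "length w = ?N" for w
    proof -
      have "lsem (LComp (sig (k + l) 1 1) (sig k 2 l)) (ginv w) (ginv v)
          = (\<Sum>w'\<in>bitstrings ?N. lsem (sig (k + l) 1 1) (ginv w) (ginv w') * lsem (sig k 2 l) (ginv w') (ginv v))"
        by (rule lsem_comp_rep[OF m2])
      also have "\<dots> = (\<Sum>w'\<in>bitstrings ?N. (if w = perm (k + l) 1 w' then 1 else 0) * (if w' = perm k 2 v then 1 else 0))"
      proof (rule sum.cong)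
        fix w' assume "w' \<in> bitstrings ?N"
        then have lw': "length w' = ?N" by (simp add: bitstrings_def)
        have a1: "length w = (k + l) + 1 + 1" "length w' = (k + l) + 1 + 1" using lw lw' by simp_all
        show "lsem (sig (k + l) 1 1) (ginv w) (ginv w') * lsem (sig k 2 l) (ginv w') (ginv v)
          = (if w = perm (k + l) 1 w' then 1 else 0) * (if w' = perm k 2 v then 1 else 0)"
          using sig_rep[OF sp a1] sig_rep[OF sp lw' lv] by simp
      qed simp
      also have "\<dots> = (if w = P then 1 else 0)"
        by (subst sum_pick_right[OF p2in finite_bitstrings]) (simp add: P_def)
      finally show ?thesis .
    qed
    have "lsem (LComp (sig k l 2) (LComp (sig (k + l) 1 1) (sig k 2 l))) (ginv u) (ginv v)
        = (\<Sum>w\<in>bitstrings ?N. lsem (sig k l 2) (ginv u) (ginv w) * lsem (LComp (sig (k + l) 1 1) (sig k 2 l)) (ginv w) (ginv v))"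
      by (rule lsem_comp_rep[OF m1])
    also have "\<dots> = (\<Sum>w\<in>bitstrings ?N. (if u = perm k l w then 1 else 0) * (if w = P then 1 else 0))"
    proof (rule sum.cong)
      fix w assume "w \<in> bitstrings ?N"
      then have lw: "length w = ?N" by (simp add: bitstrings_def)
      have a1: "length u = k + l + 2" "length w = k + l + 2" using lu lw by simp_all
      show "lsem (sig k l 2) (ginv u) (ginv w) * lsem (LComp (sig (k + l) 1 1) (sig k 2 l)) (ginv w) (ginv v)
          = (if u = perm k l w then 1 else 0) * (if w = P then 1 else 0)"
        using sig_rep[OF sp a1] inner[OF lw] by simp
    qed simp
    also have "\<dots> = (if u = perm k l P then 1 else 0)"
      by (rule sum_pick_right[OF Pin finite_bitstrings])
    also have "\<dots> = emb k 2 (qsem QSW) u v"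
    proof -
      obtain x a b z where v: "v = x @ [a, b] @ z" and lx: "length x = k" and lz: "length z = l"
        using decomp2[OF lv] by blast
      obtain x' a' b' z' where u: "u = x' @ [a', b'] @ z'" and lx': "length x' = k" and lz': "length z' = l"
        using decomp2[OF lu] by blast
      have "perm k l P = x @ [b, a] @ z" unfolding P_def v by (rule swap_perm[OF lx lz])
      moreover have "(x' @ [a', b'] @ z' = x @ [b, a] @ z) = (x' = x \<and> [a', b'] = [b, a] \<and> z' = z)"
        using lx lx' lz lz' by simp
      moreover have "emb k 2 (qsem QSW) u v = (if x' = x \<and> z' = z then (if [a', b'] = [b, a] then 1 else 0) else 0)"
        unfolding u v emb_def using lx lx' by simp
      ultimately show ?thesis using u by auto
    qed
    finally show ?thesis .
  qed
  show ?case using rep sig_modes[OF sp] by (simp del: lsem.simps qsem.simps)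
next
  case (QComp C2 C1)
  from QComp.prems have w2: "qwf C2" and w1: "qwf C1" and eqw: "qwires C1 = qwires C2" by simp_all
  define n where "n = qwires C1"
  have I1: "lmodes (enc sig k l C1) = 2 ^ (k + n + l)"
    "\<And>u v. length u = k + n + l \<Longrightarrow> length v = k + n + l \<Longrightarrow> lsem (enc sig k l C1) (ginv u) (ginv v) = emb k n (qsem C1) u v"
    using QComp.IH(2)[OF w1, of k l] by (simp_all add: n_def)
  have I2: "\<And>u v. length u = k + n + l \<Longrightarrow> length v = k + n + l \<Longrightarrow> lsem (enc sig k l C2) (ginv u) (ginv v) = emb k n (qsem C2) u v"
    using QComp.IH(1)[OF w2, of k l] eqw by (simp add: n_def)
  have qs: "qsem (QComp C2 C1) = (\<lambda>y x. \<Sum>z\<in>bitstrings n. qsem C2 y z * qsem C1 z x)"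
    by (rule ext)+ (simp add: n_def)
  have rep: "lsem (enc sig k l (QComp C2 C1)) (ginv u) (ginv v) = emb k n (qsem (QComp C2 C1)) u v"
    if lu: "length u = k + n + l" and lv: "length v = k + n + l" for u v
  proof -
    have "lsem (enc sig k l (QComp C2 C1)) (ginv u) (ginv v)
        = (\<Sum>w\<in>bitstrings (k + n + l). lsem (enc sig k l C2) (ginv u) (ginv w) * lsem (enc sig k l C1) (ginv w) (ginv v))"
      using lsem_comp_rep[OF I1(1)] by simp
    also have "\<dots> = (\<Sum>w\<in>bitstrings (k + n + l). emb k n (qsem C2) u w * emb k n (qsem C1) w v)"
      by (rule sum.cong) (auto simp: bitstrings_def I1(2) I2 lu lv)
    also have "\<dots> = emb k n (qsem (QComp C2 C1)) u v"
      unfolding qs by (rule emb_comp[OF lu lv])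
    finally show ?thesis .
  qed
  have lm: "lmodes (enc sig k l (QComp C2 C1)) = 2 ^ (k + n + l)" using I1(1) by simp
  show ?case using rep lm by (simp add: n_def del: lsem.simps qsem.simps enc.simps)
next
  case (QTens C1 C2)
  from QTens.prems have w1: "qwf C1" and w2: "qwf C2" by simp_all
  define n1 where "n1 = qwires C1"
  define n2 where "n2 = qwires C2"
  let ?N = "k + (n1 + n2) + l"
  have I1: "lmodes (enc sig k (l + n2) C1) = 2 ^ ?N"
    "\<And>u v. length u = ?N \<Longrightarrow> length v = ?N \<Longrightarrow> lsem (enc sig k (l + n2) C1) (ginv u) (ginv v) = emb k n1 (qsem C1) u v"
    using QTens.IH(1)[OF w1, of k "l + n2"] by (simp_all add: n1_def n2_def ac_simps)
  have I2: "\<And>u v. length u = ?N \<Longrightarrow> length v = ?N \<Longrightarrow> lsem (enc sig (k + n1) l C2) (ginv u) (ginv v) = emb (k + n1) n2 (qsem C2) u v"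
    using QTens.IH(2)[OF w2, of "k + n1" l] by (simp add: n1_def n2_def ac_simps)
  have rep: "lsem (enc sig k l (QTens C1 C2)) (ginv u) (ginv v) = emb k (n1 + n2) (qsem (QTens C1 C2)) u v"
    if lu: "length u = ?N" and lv: "length v = ?N" for u v
  proof -
    have lu': "length u = k + n1 + n2 + l" and lv': "length v = k + n1 + n2 + l" using lu lv by simp_all
    have "lsem (enc sig k l (QTens C1 C2)) (ginv u) (ginv v)
        = (\<Sum>w\<in>bitstrings ?N. lsem (enc sig (k + n1) l C2) (ginv u) (ginv w) * lsem (enc sig k (l + n2) C1) (ginv w) (ginv v))"
      using lsem_comp_rep[OF I1(1)] by (simp add: n1_def n2_def)
    also have "\<dots> = (\<Sum>w\<in>bitstrings ?N. emb k (n1 + n2) (idL n1 (qsem C2)) u w * emb k (n1 + n2) (idR n1 (qsem C1)) w v)"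
    proof (rule sum.cong)
      fix w assume "w \<in> bitstrings ?N"
      then have lw: "length w = ?N" by (simp add: bitstrings_def)
      have lw': "length w = k + n1 + n2 + l" using lw by simp
      show "lsem (enc sig (k + n1) l C2) (ginv u) (ginv w) * lsem (enc sig k (l + n2) C1) (ginv w) (ginv v)
          = emb k (n1 + n2) (idL n1 (qsem C2)) u w * emb k (n1 + n2) (idR n1 (qsem C1)) w v"
        using I1(2)[OF lw lv] I2[OF lu lw] emb_shiftL[OF lu' lw'] emb_shiftR[OF lw' lv'] by simp
    qed simp
    also have "\<dots> = emb k (n1 + n2) (\<lambda>y x. \<Sum>z\<in>bitstrings (n1 + n2). idL n1 (qsem C2) y z * idR n1 (qsem C1) z x) u v"
      by (rule emb_comp[OF lu lv])
    also have "\<dots> = emb k (n1 + n2) (qsem (QTens C1 C2)) u v"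
    proof (rule emb_cong[OF _ lu lv])
      fix y x :: "bool list" assume "length y = n1 + n2" "length x = n1 + n2"
      then show "(\<Sum>z\<in>bitstrings (n1 + n2). idL n1 (qsem C2) y z * idR n1 (qsem C1) z x) = qsem (QTens C1 C2) y x"
        using tens_sum by (simp add: n1_def)
    qed
    finally show ?thesis .
  qed
  have lm: "lmodes (enc sig k l (QTens C1 C2)) = 2 ^ ?N" using I1(1) by (simp add: n1_def n2_def)
  show ?case using rep lm by (simp add: n1_def n2_def del: lsem.simps qsem.simps enc.simps)
qed

theorem mainTheorem5:
  fixes sig :: "nat \<Rightarrow> nat \<Rightarrow> nat \<Rightarrow> lc" and C :: qc
  assumes "sigma_spec sig"
    and "qwf C"
    and "qwires C = n"
  shows "\<forall>y\<in>bitstrings n. \<forall>k<2 ^ n.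
           (\<Sum>j<2 ^ n. grayM n y j * lsem (E sig C) j k)
         = (\<Sum>x\<in>bitstrings n. qsem C y x * grayM n x k)"
proof (intro ballI allI impI)
  fix y and k :: nat assume y: "y \<in> bitstrings n" and k: "k < 2 ^ n"
  have ly: "length y = n" using y by (simp add: bitstrings_def)
  have lg: "length (gray n k) = n" by (rule length_gray)
  have gin: "gray n k \<in> bitstrings n" using lg by (simp add: bitstrings_def)
  have M: "lsem (enc sig 0 0 C) (ginv u) (ginv v) = emb 0 n (qsem C) u v" if "length u = n" "length v = n" for u v
    using main_lemma[OF assms(1) assms(2), of 0 0] assms(3) that by simp
  have "(\<Sum>j<2 ^ n. grayM n y j * lsem (E sig C) j k) = lsem (E sig C) (ginv y) k"
    by (rule grayM_sum[OF ly])
  also have "\<dots> = lsem (enc sig 0 0 C) (ginv y) (ginv (gray n k))"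
    using ginv_gray[OF k] by (simp add: E_def)
  also have "\<dots> = qsem C y (gray n k)"
    using M[OF ly lg] emb00[OF ly lg] by simp
  also have "\<dots> = (\<Sum>x\<in>bitstrings n. qsem C y x * (if x = gray n k then 1 else 0))"
    by (rule sum_pick_right[OF gin finite_bitstrings, symmetric])
  also have "\<dots> = (\<Sum>x\<in>bitstrings n. qsem C y x * grayM n x k)"
    by (simp add: grayM_def)
  finally show "(\<Sum>j<2 ^ n. grayM n y j * lsem (E sig C) j k) = (\<Sum>x\<in>bitstrings n. qsem C y x * grayM n x k)" .
qed


end
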